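(* Let $2<p<\infty$ and let $\mathcal{U}$ be a nonprincipal ultrafilter on $\mathbb{N}$. Let $M=\{(f_n)_{n,\mathcal{U}}\in(L^{p})^{\mathcal{U}}:\lim_{n,\mathcal{U}}\|f_n\|_2=0\}$. Then $R[(f_n)_{n,\mathcal{U}}]\in M$ for every $(f_n)_{n,\mathcal{U}}\in(L^{p})^{\mathcal{U}}$, and $R[(f_n)_{n,\mathcal{U}}]=(f_n)_{n,\mathcal{U}}$ for every $(f_n)_{n,\mathcal{U}}\in M$; hence $M$ is the range of $R$.
   Context: $L^{p}=L^{p}([0,1],\mu)$, $\mu$ Lebesgue measure ($L^p\subset L^2$ for $p>2$). $(L^{p})^{\mathcal{U}}$ is the ultrapower of $L^p$ and $(f_n)_{n,\mathcal{U}}$ the class of a bounded sequence. $R$ is the projection on $(L^{p})^{\mathcal{U}}$ given by $R[(f_n)_{n,\mathcal{U}}]=\lim_{r\to\infty}(f_nI(|f_n|>r))_{n,\mathcal{U}}$ (norm limit), with $I(|f|>r)$ the indicator of $\{|f|>r\}$. *)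

theory Defs
  imports "HOL-Analysis.Analysis"
begin

definition ultrafilter_nat :: "nat filter \<Rightarrow> bool" where
  "ultrafilter_nat U \<longleftrightarrow> U \<noteq> bot \<and> (\<forall>P. eventually P U \<or> eventually (\<lambda>n. \<not> P n) U)"

definition nonprincipal :: "nat filter \<Rightarrow> bool" where
  "nonprincipal U \<longleftrightarrow> (\<forall>m. eventually (\<lambda>n. n \<noteq> m) U)"

text \<open>L^p([0,1]) with Lebesgue measure (real-valued functions; elements are
  representatives, equality a.e. is handled through the seminorm).\<close>
abbreviation I01 :: "real measure" where
  "I01 \<equiv> lebesgue_on {0..1}"

definition memLp :: "real \<Rightarrow> (real \<Rightarrow> real) \<Rightarrow> bool" where
  "memLp p f \<longleftrightarrow> f \<in> borel_measurable I01 \<and> integrable I01 (\<lambda>x. \<bar>f x\<bar> powr p)"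

definition Lp_norm :: "real \<Rightarrow> (real \<Rightarrow> real) \<Rightarrow> real" where
  "Lp_norm p f = (LINT x|I01. \<bar>f x\<bar> powr p) powr (1 / p)"

text \<open>A representative of an element of the ultrapower: a bounded sequence in L^p.\<close>
definition up_seq :: "real \<Rightarrow> (nat \<Rightarrow> real \<Rightarrow> real) \<Rightarrow> bool" where
  "up_seq p F \<longleftrightarrow> (\<forall>n. memLp p (F n)) \<and> bounded (range (\<lambda>n. Lp_norm p (F n)))"

definition up_dist :: "real \<Rightarrow> nat filter \<Rightarrow> (nat \<Rightarrow> real \<Rightarrow> real) \<Rightarrow> (nat \<Rightarrow> real \<Rightarrow> real) \<Rightarrow> real" where
  "up_dist p U F G = Lim U (\<lambda>n. Lp_norm p (\<lambda>x. F n x - G n x))"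

definition trunc :: "real \<Rightarrow> (real \<Rightarrow> real) \<Rightarrow> real \<Rightarrow> real" where
  "trunc r f = (\<lambda>x. if \<bar>f x\<bar> > r then f x else 0)"

text \<open>G represents R[F]: the classes of (trunc r (F n))_n converge to the class of G
  in the ultrapower norm as r tends to infinity.\<close>
definition R_rep :: "real \<Rightarrow> nat filter \<Rightarrow> (nat \<Rightarrow> real \<Rightarrow> real) \<Rightarrow> (nat \<Rightarrow> real \<Rightarrow> real) \<Rightarrow> bool" where
  "R_rep p U F G \<longleftrightarrow> up_seq p G \<and>
     ((\<lambda>r. up_dist p U (\<lambda>n. trunc r (F n)) G) \<longlongrightarrow> 0) at_top"

definition in_M :: "nat filter \<Rightarrow> (nat \<Rightarrow> real \<Rightarrow> real) \<Rightarrow> bool" where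
  "in_M U F \<longleftrightarrow> ((\<lambda>n. Lp_norm 2 (F n)) \<longlongrightarrow> 0) U"

end

theory Submission
  imports Defs
begin


lemma ultra_conv:
  fixes f :: "nat \<Rightarrow> real"
  assumes U: "ultrafilter_nat U" and B: "\<And>n. \<bar>f n\<bar> \<le> C"
  shows "(f \<longlongrightarrow> Lim U f) U"
proof -
  have nb: "U \<noteq> bot" using U unfolding ultrafilter_nat_def by auto
  define S where "S = {c. eventually (\<lambda>n. c \<le> f n) U}"
  have "\<And>n. -C \<le> f n" using B by (metis abs_le_iff minus_le_iff)
  hence "-C \<in> S" by (auto simp: S_def intro!: always_eventually)
  hence ne: "S \<noteq> {}" by auto
  have ub: "\<And>c. c \<in> S \<Longrightarrow> c \<le> C"
  proof -
    fix c assume "c \<in> S"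
    hence "eventually (\<lambda>n. c \<le> f n) U" by (simp add: S_def)
    hence "eventually (\<lambda>n. c \<le> C) U"
      by (rule eventually_mono) (use B[of "_"] in \<open>smt (verit) abs_le_iff\<close>)
    thus "c \<le> C" using nb by (simp add: eventually_const_iff)
  qed
  define l where "l = Sup S"
  have "(f \<longlongrightarrow> l) U"
  proof (rule order_tendstoI)
    fix a assume "a < l"
    then obtain c where "c \<in> S" "a < c" using ne ub unfolding l_def
      by (meson less_cSupE)
    thus "eventually (\<lambda>n. a < f n) U"
      by (auto simp: S_def elim!: eventually_mono)
  next
    fix a assume "l < a"
    show "eventually (\<lambda>n. f n < a) U"
    proof (rule ccontr)
      assume "\<not> ?thesis"
      hence "eventually (\<lambda>n. \<not> f n < a) U" using U unfolding ultrafilter_nat_def by blast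
      hence "a \<in> S" by (auto simp: S_def elim!: eventually_mono)
      hence "a \<le> l" unfolding l_def using ub by (meson bdd_aboveI cSup_upper)
      thus False using \<open>l < a\<close> by simp
    qed
  qed
  thus ?thesis using nb by (simp add: tendsto_Lim)
qed

lemma trunc_meas: assumes [measurable]: "f \<in> borel_measurable M" shows "trunc r f \<in> borel_measurable M"
  unfolding trunc_def
  by (rule measurable_If) (auto intro!: pred_intros_logic borel_measurable_abs pred_less_const)

lemma fm: "finite_measure I01" by (simp add: finite_measure_lebesgue_on)



definition PI :: "real \<Rightarrow> (real \<Rightarrow> real) \<Rightarrow> real" where
  "PI p f = (LINT x|I01. \<bar>f x\<bar> powr p)"

lemma PI_nonneg: "0 \<le> PI p f"
  unfolding PI_def by (rule integral_nonneg_AE) auto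

lemma Lp_norm_PI: "Lp_norm p f = PI p f powr (1/p)"
  by (simp add: Lp_norm_def PI_def)

lemma PI_Lp: "0 < p \<Longrightarrow> PI p f = Lp_norm p f powr p"
  using PI_nonneg[of p f] by (simp add: Lp_norm_PI powr_powr)

lemma memLp_int: "memLp p f \<Longrightarrow> integrable I01 (\<lambda>x. \<bar>f x\<bar> powr p)"
  by (simp add: memLp_def)

lemma pw_trunc: "0 < p \<Longrightarrow> \<bar>trunc r f x\<bar> powr p \<le> \<bar>f x\<bar> powr p"
  by (auto simp: trunc_def)

lemma memLp_trunc:
  assumes "memLp p f" "0 < p"
  shows "memLp p (trunc r f)" "PI p (trunc r f) \<le> PI p f"
proof -
  have m: "trunc r f \<in> borel_measurable I01" using assms by (simp add: memLp_def trunc_meas)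
  have i: "integrable I01 (\<lambda>x. \<bar>trunc r f x\<bar> powr p)"
    by (rule Bochner_Integration.integrable_bound[OF memLp_int[OF assms(1)]]) (use m pw_trunc[OF assms(2)] in auto)
  thus "memLp p (trunc r f)" using m by (simp add: memLp_def)
  show "PI p (trunc r f) \<le> PI p f" unfolding PI_def
    by (rule integral_mono[OF i memLp_int[OF assms(1)]]) (use pw_trunc[OF assms(2)] in auto)
qed

lemma pw_diff:
  assumes "0 < p"
  shows "\<bar>a - b\<bar> powr p \<le> 2 powr p * (\<bar>a\<bar> powr p + \<bar>b::real\<bar> powr p)"
proof -
  have "\<bar>a - b\<bar> powr p \<le> (2 * max \<bar>a\<bar> \<bar>b\<bar>) powr p"
    by (rule powr_mono2) (use assms in auto)
  also have "\<dots> = 2 powr p * max \<bar>a\<bar> \<bar>b\<bar> powr p" by (simp add: powr_mult)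
  also have "max \<bar>a\<bar> \<bar>b\<bar> powr p \<le> \<bar>a\<bar> powr p + \<bar>b\<bar> powr p"
    by (simp add: max_def)
  hence "2 powr p * max \<bar>a\<bar> \<bar>b\<bar> powr p \<le> 2 powr p * (\<bar>a\<bar> powr p + \<bar>b\<bar> powr p)"
    by (intro mult_left_mono) auto
  finally show ?thesis .
qed

lemma memLp_diff:
  assumes "memLp p f" "memLp p g" "0 < p"
  shows "memLp p (\<lambda>x. f x - g x)" "PI p (\<lambda>x. f x - g x) \<le> 2 powr p * (PI p f + PI p g)"
proof -
  have m: "(\<lambda>x. f x - g x) \<in> borel_measurable I01" using assms by (intro borel_measurable_diff) (auto simp: memLp_def)
  have i2: "integrable I01 (\<lambda>x. 2 powr p * (\<bar>f x\<bar> powr p + \<bar>g x\<bar> powr p))"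
    using memLp_int[OF assms(1)] memLp_int[OF assms(2)] by auto
  have i: "integrable I01 (\<lambda>x. \<bar>f x - g x\<bar> powr p)"
    by (rule Bochner_Integration.integrable_bound[OF i2]) (use m pw_diff[OF assms(3)] in auto)
  thus "memLp p (\<lambda>x. f x - g x)" using m by (simp add: memLp_def)
  have "PI p (\<lambda>x. f x - g x) \<le> (LINT x|I01. 2 powr p * (\<bar>f x\<bar> powr p + \<bar>g x\<bar> powr p))"
    unfolding PI_def by (rule integral_mono[OF i i2]) (use pw_diff[OF assms(3)] in auto)
  also have "\<dots> = 2 powr p * (PI p f + PI p g)"
    using memLp_int[OF assms(1)] memLp_int[OF assms(2)] by (simp add: PI_def)
  finally show "PI p (\<lambda>x. f x - g x) \<le> 2 powr p * (PI p f + PI p g)" .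
qed

lemma pw_sq1: "2 \<le> p \<Longrightarrow> \<bar>x::real\<bar> powr 2 \<le> 1 + \<bar>x\<bar> powr p"
proof (cases "\<bar>x\<bar> \<le> 1")
  case True
  hence "\<bar>x\<bar> powr 2 \<le> 1" by (simp add: abs_square_le_1)
  thus ?thesis by (smt (verit) powr_ge_zero)
next
  case False
  assume "2 \<le> p"
  hence "\<bar>x\<bar> powr 2 \<le> \<bar>x\<bar> powr p" using False by (intro powr_mono) auto
  thus ?thesis by simp
qed

lemma memLp_sq:
  assumes "memLp p f" "2 \<le> p"
  shows "integrable I01 (\<lambda>x. \<bar>f x\<bar> powr 2)"
proof -
  have m: "f \<in> borel_measurable I01" using assms by (simp add: memLp_def)
  have i2: "integrable I01 (\<lambda>x. 1 + \<bar>f x\<bar> powr p)"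
    using memLp_int[OF assms(1)] by auto
  show ?thesis
    by (rule Bochner_Integration.integrable_bound[OF i2]) (use m pw_sq1[OF assms(2)] in \<open>auto simp: abs_le_iff\<close>)
qed

lemma pw_sq_delta:
  assumes "0 < d" "2 < p"
  shows "\<bar>x::real\<bar> powr 2 \<le> d powr 2 + d powr (2 - p) * \<bar>x\<bar> powr p"
proof (cases "\<bar>x\<bar> \<le> d")
  case True
  hence "\<bar>x\<bar> powr 2 \<le> d powr 2" by (intro powr_mono2) auto
  thus ?thesis by (smt (verit) mult_nonneg_nonneg powr_ge_zero)
next
  case False
  have "\<bar>x\<bar> powr 2 = \<bar>x\<bar> powr (2 - p) * \<bar>x\<bar> powr p" by (simp flip: powr_add)
  also have "\<dots> \<le> d powr (2 - p) * \<bar>x\<bar> powr p"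
    by (intro mult_right_mono powr_mono2') (use False assms in auto)
  finally show ?thesis by (smt (verit) powr_ge_zero)
qed

lemma pw_trunc_sq:
  assumes "0 < r" "2 < p"
  shows "\<bar>trunc r f x\<bar> powr 2 \<le> r powr (2 - p) * \<bar>trunc r f x\<bar> powr p"
proof (cases "r < \<bar>f x\<bar>")
  case True
  have "\<bar>f x\<bar> powr 2 = \<bar>f x\<bar> powr (2 - p) * \<bar>f x\<bar> powr p" by (simp flip: powr_add)
  also have "\<dots> \<le> r powr (2 - p) * \<bar>f x\<bar> powr p"
    by (intro mult_right_mono powr_mono2') (use True assms in auto)
  finally show ?thesis using True by (simp add: trunc_def)
qed (simp add: trunc_def)

lemma pw_low:
  assumes "0 < r" "2 < p"
  shows "\<bar>trunc r f x - f x\<bar> powr p \<le> r powr (p - 2) * \<bar>f x\<bar> powr 2"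
proof (cases "r < \<bar>f x\<bar>")
  case False
  have "\<bar>f x\<bar> powr p = \<bar>f x\<bar> powr (p - 2) * \<bar>f x\<bar> powr 2" by (metis powr_add diff_add_cancel)
  also have "\<dots> \<le> r powr (p - 2) * \<bar>f x\<bar> powr 2"
    by (intro mult_right_mono powr_mono2) (use False assms in auto)
  finally show ?thesis using False by (simp add: trunc_def)
qed (use assms in \<open>simp add: trunc_def\<close>)



lemma meas01[simp]: "measure I01 {0..1} = 1"
  by (simp add: measure_restrict_space)

lemma PI_bound:
  assumes "up_seq p F" "0 < p"
  obtains C where "0 \<le> C" "\<And>n. PI p (F n) \<le> C"
proof -
  obtain B where B: "\<And>n. norm (Lp_norm p (F n)) \<le> B"
    using assms(1) unfolding up_seq_def bounded_iff by auto
  have "PI p (F n) \<le> B powr p" for n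
    unfolding PI_Lp[OF assms(2)]
    by (rule powr_mono2) (use assms B[of n] in \<open>auto simp: Lp_norm_PI\<close>)
  thus ?thesis using that[of "B powr p"] by auto
qed

lemma bounded_from_PI:
  assumes "\<And>n. PI p (F n) \<le> C" "0 < p"
  shows "\<bar>Lp_norm p (F n)\<bar> \<le> C powr (1/p)" "bounded (range (\<lambda>n. Lp_norm p (F n)))"
proof -
  show *: "\<bar>Lp_norm p (F n)\<bar> \<le> C powr (1/p)" for n
    unfolding Lp_norm_PI using assms PI_nonneg[of p "F n"]
    by (auto intro!: powr_mono2)
  show "bounded (range (\<lambda>n. Lp_norm p (F n)))"
    unfolding bounded_iff using * by auto
qed

lemma PI_sq_split:
  assumes "memLp p T" "memLp p G" "2 \<le> p"
  shows "PI 2 G \<le> 2 * PI 2 (\<lambda>x. T x - G x) + 2 * PI 2 T"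
proof -
  have p0: "0 < p" using assms by simp
  have iD: "integrable I01 (\<lambda>x. \<bar>T x - G x\<bar> powr 2)"
    by (rule memLp_sq[OF memLp_diff(1)[OF assms(1,2) p0] assms(3)])
  have iT: "integrable I01 (\<lambda>x. \<bar>T x\<bar> powr 2)" by (rule memLp_sq[OF assms(1,3)])
  have iG: "integrable I01 (\<lambda>x. \<bar>G x\<bar> powr 2)" by (rule memLp_sq[OF assms(2,3)])
  have "PI 2 G \<le> (LINT x|I01. 2 * \<bar>T x - G x\<bar> powr 2 + 2 * \<bar>T x\<bar> powr 2)"
    unfolding PI_def
  proof (rule integral_mono)
    show "integrable I01 (\<lambda>x. 2 * \<bar>T x - G x\<bar> powr 2 + 2 * \<bar>T x\<bar> powr 2)"
      using iD iT by auto
    fix x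
    have e: "2 * (T x - G x)\<^sup>2 + 2 * (T x)\<^sup>2 - (G x)\<^sup>2 = (2 * T x - G x)\<^sup>2"
      by (simp add: power2_eq_square algebra_simps)
    have "(G x)\<^sup>2 \<le> 2 * (T x - G x)\<^sup>2 + 2 * (T x)\<^sup>2"
      using e zero_le_power2[of "2 * T x - G x"] by linarith
    thus "\<bar>G x\<bar> powr 2 \<le> 2 * \<bar>T x - G x\<bar> powr 2 + 2 * \<bar>T x\<bar> powr 2" by simp
  qed (rule iG)
  also have "\<dots> = 2 * PI 2 (\<lambda>x. T x - G x) + 2 * PI 2 T"
    using iD iT by (simp add: PI_def)
  finally show ?thesis .
qed

lemma PI_sq_delta:
  assumes "memLp p D" "2 < p" "0 < d"
  shows "PI 2 D \<le> d powr 2 + d powr (2 - p) * PI p D"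
proof -
  have iD: "integrable I01 (\<lambda>x. \<bar>D x\<bar> powr 2)" by (rule memLp_sq) (use assms in auto)
  have ip: "integrable I01 (\<lambda>x. \<bar>D x\<bar> powr p)" by (rule memLp_int[OF assms(1)])
  have "PI 2 D \<le> (LINT x|I01. d powr 2 + d powr (2 - p) * \<bar>D x\<bar> powr p)"
    unfolding PI_def
    by (rule integral_mono[OF iD]) (use ip pw_sq_delta[OF assms(3,2)] in auto)
  also have "\<dots> = d powr 2 + d powr (2 - p) * PI p D"
    using ip by (simp add: PI_def)
  finally show ?thesis .
qed

lemma PI_trunc_sq:
  assumes "memLp p f" "2 < p" "0 < r"
  shows "PI 2 (trunc r f) \<le> r powr (2 - p) * PI p (trunc r f)"
proof -
  have mT: "memLp p (trunc r f)" using memLp_trunc assms by auto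
  have iD: "integrable I01 (\<lambda>x. \<bar>trunc r f x\<bar> powr 2)" by (rule memLp_sq[OF mT]) (use assms in auto)
  have ip: "integrable I01 (\<lambda>x. \<bar>trunc r f x\<bar> powr p)" by (rule memLp_int[OF mT])
  have "PI 2 (trunc r f) \<le> (LINT x|I01. r powr (2 - p) * \<bar>trunc r f x\<bar> powr p)"
    unfolding PI_def
    by (rule integral_mono[OF iD]) (use ip pw_trunc_sq[OF assms(3,2)] in auto)
  also have "\<dots> = r powr (2 - p) * PI p (trunc r f)"
    using ip by (simp add: PI_def)
  finally show ?thesis .
qed

lemma PI_low:
  assumes "memLp p f" "2 < p" "0 < r"
  shows "PI p (\<lambda>x. trunc r f x - f x) \<le> r powr (p - 2) * PI 2 f"
proof -
  have mT: "memLp p (trunc r f)" using memLp_trunc assms by auto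
  have iD: "integrable I01 (\<lambda>x. \<bar>trunc r f x - f x\<bar> powr p)"
    by (rule memLp_int[OF memLp_diff(1)[OF mT assms(1)]]) (use assms in auto)
  have i2: "integrable I01 (\<lambda>x. \<bar>f x\<bar> powr 2)" by (rule memLp_sq) (use assms in auto)
  have "PI p (\<lambda>x. trunc r f x - f x) \<le> (LINT x|I01. r powr (p - 2) * \<bar>f x\<bar> powr 2)"
    unfolding PI_def
    by (rule integral_mono[OF iD]) (use i2 pw_low[OF assms(3,2)] in auto)
  also have "\<dots> = r powr (p - 2) * PI 2 f"
    using i2 by (simp add: PI_def)
  finally show ?thesis .
qed



lemma part3:
  assumes p: "2 < p" and U: "ultrafilter_nat U" and F: "up_seq p F" and M: "in_M U F"
  shows "R_rep p U F F"
proof -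
  have nb: "U \<noteq> bot" using U unfolding ultrafilter_nat_def by auto
  have mF: "\<And>n. memLp p (F n)" using F by (simp add: up_seq_def)
  have L2: "((\<lambda>n. Lp_norm 2 (F n)) \<longlongrightarrow> 0) U" using M by (simp add: in_M_def)
  have P2: "((\<lambda>n. PI 2 (F n)) \<longlongrightarrow> 0) U"
  proof -
    have "((\<lambda>n. Lp_norm 2 (F n) powr 2) \<longlongrightarrow> 0) U"
      by (rule tendsto_zero_powrI[OF L2 tendsto_const]) (auto simp: Lp_norm_PI)
    thus ?thesis by (simp add: PI_Lp[of 2, symmetric])
  qed
  have z: "up_dist p U (\<lambda>n. trunc r (F n)) F = 0" if r: "0 < r" for r
  proof -
    have "((\<lambda>n. PI p (\<lambda>x. trunc r (F n) x - F n x)) \<longlongrightarrow> 0) U"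
    proof (rule tendsto_sandwich)
      show "\<forall>\<^sub>F n in U. 0 \<le> PI p (\<lambda>x. trunc r (F n) x - F n x)" by (simp add: PI_nonneg)
      show "\<forall>\<^sub>F n in U. PI p (\<lambda>x. trunc r (F n) x - F n x) \<le> r powr (p - 2) * PI 2 (F n)"
        using PI_low[OF mF p r] by simp
      show "((\<lambda>n. r powr (p - 2) * PI 2 (F n)) \<longlongrightarrow> 0) U"
        using tendsto_mult_right_zero[OF P2] by simp
    qed simp
    hence "((\<lambda>n. Lp_norm p (\<lambda>x. trunc r (F n) x - F n x)) \<longlongrightarrow> 0) U"
      unfolding Lp_norm_PI
      by (rule tendsto_zero_powrI[OF _ tendsto_const]) (use p in \<open>auto simp: PI_nonneg\<close>)
    thus ?thesis unfolding up_dist_def using nb by (simp add: tendsto_Lim)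
  qed
  have "((\<lambda>r. up_dist p U (\<lambda>n. trunc r (F n)) F) \<longlongrightarrow> 0) at_top"
    by (rule tendsto_eventually, rule eventually_mono[OF eventually_gt_at_top[of "0::real"]]) (use z in auto)
  thus ?thesis using F by (simp add: R_rep_def)
qed

lemma arith_aux: "(g::real) \<le> 2 * (a + b) + 2 * c \<Longrightarrow> b \<le> e / 8 \<Longrightarrow> c \<le> w \<Longrightarrow> 2 * w < e / 4 \<Longrightarrow> a = e / 8 \<Longrightarrow> 0 < e \<Longrightarrow> g < e"
  by simp

lemma part2:
  assumes p: "2 < p" and U: "ultrafilter_nat U" and F: "up_seq p F" and R: "R_rep p U F G"
  shows "in_M U G"
proof -
  have nb: "U \<noteq> bot" using U unfolding ultrafilter_nat_def by auto
  have p0: "0 < p" using p by simp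
  have mF: "\<And>n. memLp p (F n)" using F by (simp add: up_seq_def)
  have G: "up_seq p G" and Rt: "((\<lambda>r. up_dist p U (\<lambda>n. trunc r (F n)) G) \<longlongrightarrow> 0) at_top"
    using R by (auto simp: R_rep_def)
  have mG: "\<And>n. memLp p (G n)" using G by (simp add: up_seq_def)
  obtain C where C0: "0 \<le> C" and C: "\<And>n. PI p (F n) \<le> C" using PI_bound[OF F p0] by auto
  obtain C' where C'0: "0 \<le> C'" and C': "\<And>n. PI p (G n) \<le> C'" using PI_bound[OF G p0] by auto
  have P2: "((\<lambda>n. PI 2 (G n)) \<longlongrightarrow> 0) U"
  proof (rule order_tendstoI)
    fix a :: real assume "a < 0"
    hence "\<And>n. a < PI 2 (G n)" using PI_nonneg[of 2] by (meson less_le_trans)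
    thus "\<forall>\<^sub>F n in U. a < PI 2 (G n)" by (simp add: always_eventually)
  next
    fix e :: real assume e: "0 < e"
    define d where "d = sqrt (e / 8)"
    have d0: "0 < d" using e by (simp add: d_def)
    have dd: "d powr 2 = e / 8" using e by (simp add: d_def)
    define K where "K = d powr (2 - p)"
    have K0: "0 < K" using d0 by (simp add: K_def)
    define eta where "eta = (e / (8 * K)) powr (1 / p)"
    have eta0: "0 < eta" using e K0 by (simp add: eta_def)
    have etap: "eta powr p = e / (8 * K)" using e K0 p0 by (simp add: eta_def powr_powr)
    have ev1: "\<forall>\<^sub>F r in at_top. up_dist p U (\<lambda>n. trunc r (F n)) G < eta"
      using order_tendstoD(2)[OF Rt eta0] .
    have "((\<lambda>r::real. 2 * (C + 1) * r powr (2 - p)) \<longlongrightarrow> 2 * (C + 1) * 0) at_top"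
      by (intro tendsto_mult tendsto_const tendsto_neg_powr filterlim_ident) (use p in auto)
    hence "((\<lambda>r::real. 2 * (C + 1) * r powr (2 - p)) \<longlongrightarrow> 0) at_top" by simp
    hence ev2: "\<forall>\<^sub>F r in at_top. 2 * (C + 1) * r powr (2 - p) < e / 4"
      by (rule order_tendstoD(2)) (use e in simp)
    obtain r where r0: "0 < r" and r1: "up_dist p U (\<lambda>n. trunc r (F n)) G < eta"
      and r2: "2 * (C + 1) * r powr (2 - p) < e / 4"
      using eventually_happens'[OF _ eventually_conj[OF eventually_gt_at_top[of "0::real"] eventually_conj[OF ev1 ev2]]]
      by auto
    define D where "D n = (\<lambda>x. trunc r (F n) x - G n x)" for n
    have mT: "\<And>n. memLp p (trunc r (F n))" using memLp_trunc(1)[OF mF p0] .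
    have mD: "\<And>n. memLp p (D n)" unfolding D_def using memLp_diff(1)[OF mT mG p0] .
    have PT: "PI p (trunc r (F n)) \<le> C" for n using memLp_trunc(2)[OF mF[of n] p0, of r] C[of n] by linarith
    have PD: "PI p (D n) \<le> 2 powr p * (C + C')" for n
      using memLp_diff(2)[OF mT[of n] mG[of n] p0] PT[of n] C'[of n] unfolding D_def
      by (smt (verit) mult_left_mono powr_ge_zero)
    have conv: "((\<lambda>n. Lp_norm p (D n)) \<longlongrightarrow> up_dist p U (\<lambda>n. trunc r (F n)) G) U"
      unfolding up_dist_def D_def
      by (rule ultra_conv[OF U bounded_from_PI(1)[OF PD[unfolded D_def] p0]])
    have evD: "\<forall>\<^sub>F n in U. Lp_norm p (D n) < eta" using order_tendstoD(2)[OF conv r1] .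
    show "\<forall>\<^sub>F n in U. PI 2 (G n) < e"
    proof (rule eventually_mono[OF evD])
      fix n assume lt: "Lp_norm p (D n) < eta"
      have "PI p (D n) = Lp_norm p (D n) powr p" by (rule PI_Lp[OF p0])
      also have "\<dots> < eta powr p"
        by (rule powr_less_mono2) (use p0 lt in \<open>auto simp: Lp_norm_PI\<close>)
      finally have pd: "PI p (D n) < e / (8 * K)" using etap by simp
      have "PI 2 (G n) \<le> 2 * PI 2 (D n) + 2 * PI 2 (trunc r (F n))"
        unfolding D_def by (rule PI_sq_split[OF mT mG]) (use p in auto)
      also have "PI 2 (D n) \<le> d powr 2 + K * PI p (D n)"
        unfolding K_def by (rule PI_sq_delta[OF mD p d0])
      also have "PI 2 (trunc r (F n)) \<le> r powr (2 - p) * PI p (trunc r (F n))"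
        by (rule PI_trunc_sq[OF mF p r0])
      finally have "PI 2 (G n) \<le> 2 * (d powr 2 + K * PI p (D n)) + 2 * (r powr (2 - p) * PI p (trunc r (F n)))"
        by linarith
      moreover have "K * PI p (D n) \<le> e / 8"
        using pd K0 by (simp add: field_simps)
      moreover have "r powr (2 - p) * PI p (trunc r (F n)) \<le> r powr (2 - p) * (C + 1)"
        using PT[of n] by (intro mult_left_mono) auto
      moreover have "2 * (r powr (2 - p) * (C + 1)) < e / 4" using r2 by (simp only: mult.commute mult.left_commute mult.assoc)
      ultimately show "PI 2 (G n) < e" using dd e arith_aux by blast
    qed
  qed
  have "((\<lambda>n. PI 2 (G n) powr (1/2)) \<longlongrightarrow> 0) U"
    by (rule tendsto_zero_powrI[OF P2 tendsto_const]) (auto simp: PI_nonneg)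
  thus ?thesis by (simp add: in_M_def Lp_norm_PI)
qed



lemma pw_trunc_mono: "0 < p \<Longrightarrow> t \<le> s \<Longrightarrow> \<bar>trunc s f x\<bar> powr p \<le> \<bar>trunc t f x\<bar> powr p"
  by (auto simp: trunc_def)

lemma PI_trunc_mono:
  assumes "memLp p f" "0 < p" "t \<le> s"
  shows "PI p (trunc s f) \<le> PI p (trunc t f)"
  unfolding PI_def
  by (rule integral_mono[OF memLp_int[OF memLp_trunc(1)[OF assms(1,2)]] memLp_int[OF memLp_trunc(1)[OF assms(1,2)]]])
     (use pw_trunc_mono[OF assms(2,3)] in auto)

lemma PI_diff_trunc:
  assumes "memLp p f" "0 < p" "r \<le> s"
  shows "PI p (\<lambda>x. trunc r f x - trunc s f x) = PI p (trunc r f) - PI p (trunc s f)"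
proof -
  have pw: "\<bar>trunc r f x - trunc s f x\<bar> powr p = \<bar>trunc r f x\<bar> powr p - \<bar>trunc s f x\<bar> powr p" for x
    using assms(3) by (auto simp: trunc_def)
  show ?thesis unfolding PI_def pw
    by (rule Bochner_Integration.integral_diff; rule memLp_int[OF memLp_trunc(1)[OF assms(1,2)]])
qed

lemma part1:
  assumes p: "2 < p" and U: "ultrafilter_nat U" and np: "nonprincipal U" and F: "up_seq p F"
  shows "\<exists>G. R_rep p U F G"
proof -
  have nb: "U \<noteq> bot" using U unfolding ultrafilter_nat_def by auto
  have p0: "0 < p" using p by simp
  have mF: "\<And>n. memLp p (F n)" using F by (simp add: up_seq_def)
  obtain C where C0: "0 \<le> C" and C: "\<And>n. PI p (F n) \<le> C" using PI_bound[OF F p0] by auto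
  define phi where "phi n t = PI p (trunc t (F n))" for n t
  have phi0: "0 \<le> phi n t" for n t by (simp add: phi_def PI_nonneg)
  have phiC: "phi n t \<le> C" for n t
    using memLp_trunc(2)[OF mF[of n] p0, of t] C[of n] by (simp add: phi_def)
  have phim: "t \<le> s \<Longrightarrow> phi n s \<le> phi n t" for n t s
    unfolding phi_def by (rule PI_trunc_mono[OF mF p0])
  define ph where "ph t = Lim U (\<lambda>n. phi n t)" for t
  have conv: "((\<lambda>n. phi n t) \<longlongrightarrow> ph t) U" for t
    unfolding ph_def by (rule ultra_conv[OF U]) (use phi0 phiC in \<open>auto simp: abs_le_iff\<close>)
  have ph0: "0 \<le> ph t" for t
    by (rule tendsto_lowerbound[OF conv]) (use phi0 nb in auto)
  have phm: "t \<le> s \<Longrightarrow> ph s \<le> ph t" for t s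
    by (rule tendsto_le[OF nb conv conv]) (use phim in auto)
  define L where "L = Inf (range (\<lambda>k::nat. ph (real k)))"
  have bdd: "bdd_below (range (\<lambda>k::nat. ph (real k)))" unfolding bdd_below_def using ph0 by auto
  have Lk: "L \<le> ph (real k)" for k unfolding L_def by (rule cInf_lower[OF _ bdd]) auto
  have Lt: "L \<le> ph t" for t
  proof -
    have "t \<le> real (nat \<lceil>t\<rceil>)" by linarith
    thus ?thesis using Lk[of "nat \<lceil>t\<rceil>"] phm by (meson order_trans)
  qed
  have below: "\<exists>k::nat. ph (real k) < L + e" if "0 < e" for e
  proof -
    have "L < L + e" using that by simp
    then obtain y where "y \<in> range (\<lambda>k::nat. ph (real k))" "y < L + e"
      unfolding L_def by (subst (asm) cInf_less_iff[OF _ bdd]) auto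
    thus ?thesis by auto
  qed
  have phL: "(ph \<longlongrightarrow> L) at_top"
  proof (rule order_tendstoI)
    fix a assume "a < L"
    thus "\<forall>\<^sub>F t in at_top. a < ph t" using Lt by (auto intro: always_eventually less_le_trans)
  next
    fix a assume "L < a"
    then obtain k :: nat where k: "ph (real k) < a" using below[of "a - L"] by auto
    show "\<forall>\<^sub>F t in at_top. ph t < a"
      using eventually_ge_at_top[of "real k"] by (rule eventually_mono) (use k phm in \<open>meson le_less_trans\<close>)
  qed
  define c where "c n j \<longleftrightarrow> \<bar>phi n (real j) - ph (real j)\<bar> < 1 / (real j + 1)" for n j
  define S where "S n = {k. k \<le> n \<and> (\<forall>j<k. c n j)}" for n
  define kk where "kk n = Max (S n)" for n
  define rho where "rho n = real (kk n - 1)" for n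
  have finS: "finite (S n)" for n by (simp add: S_def)
  have S0: "0 \<in> S n" for n by (simp add: S_def)
  have kkS: "kk n \<in> S n" for n unfolding kk_def using finS S0 by (intro Max_in) auto
  have kkge: "K \<in> S n \<Longrightarrow> K \<le> kk n" for K n unfolding kk_def using finS by simp
  have evc: "eventually (\<lambda>n. c n j) U" for j
  proof -
    have "0 < 1 / (real j + 1)" by simp
    from tendstoD[OF conv this] show ?thesis
      by (rule eventually_mono) (simp add: c_def dist_real_def)
  qed
  have evK: "eventually (\<lambda>n. K \<le> kk n) U" for K
  proof -
    have e1: "eventually (\<lambda>n. \<forall>m\<in>{..<K}. n \<noteq> m) U"
      by (rule eventually_ball_finite) (use np in \<open>auto simp: nonprincipal_def\<close>)
    have e2: "eventually (\<lambda>n. \<forall>j\<in>{..<K}. c n j) U"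
      by (rule eventually_ball_finite) (use evc in auto)
    show ?thesis
      using eventually_conj[OF e1 e2] by (rule eventually_mono) (auto simp: S_def intro!: kkge)
  qed
  define G where "G n = trunc (rho n) (F n)" for n
  have mG: "memLp p (G n)" for n unfolding G_def by (rule memLp_trunc(1)[OF mF p0])
  have PG: "PI p (G n) \<le> C" for n using phiC[of n "rho n"] by (simp add: G_def phi_def)
  have upG: "up_seq p G" using mG bounded_from_PI(2)[OF PG p0] by (simp add: up_seq_def)
  have phirho: "((\<lambda>n. phi n (rho n)) \<longlongrightarrow> L) U"
  proof (rule tendstoI)
    fix e :: real assume e: "0 < e"
    obtain K1 :: nat where K1: "ph (real K1) < L + e / 2" using below[of "e/2"] e by auto
    obtain K2 :: nat where K2: "1 / (real K2 + 1) < e / 2"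
    proof -
      obtain K2 :: nat where "2 / e < real K2" using reals_Archimedean2 by blast
      hence "1 / (real K2 + 1) < e / 2" using e by (simp add: field_simps) 
      thus ?thesis using that by blast
    qed
    define K where "K = max K1 K2"
    have phK: "ph (real K) < L + e / 2" using K1 phm[of "real K1" "real K"] by (simp add: K_def)
    have invK: "1 / (real K + 1) < e / 2"
      using K2 by (smt (verit) K_def frac_le max.cobounded2 of_nat_0_le_iff of_nat_le_iff)
    show "\<forall>\<^sub>F n in U. dist (phi n (rho n)) L < e"
    proof (rule eventually_mono[OF evK[of "K + 1"]])
      fix n assume Kn: "K + 1 \<le> kk n"
      define j where "j = kk n - 1"
      have jl: "j < kk n" "K \<le> j" using Kn by (auto simp: j_def)
      have cj: "c n j" using kkS[of n] jl by (auto simp: S_def)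
      have "1 / (real j + 1) \<le> 1 / (real K + 1)" using jl by (simp add: frac_le)
      hence a: "\<bar>phi n (real j) - ph (real j)\<bar> < e / 2" using cj invK by (simp add: c_def)
      have b: "ph (real j) < L + e / 2" using phK phm[of "real K" "real j"] jl by simp
      have "L \<le> ph (real j)" by (rule Lt)
      moreover have rj: "rho n = real j" by (simp add: rho_def j_def)
      ultimately show "dist (phi n (rho n)) L < e" using a b unfolding dist_real_def rj by arith
    qed
  qed
  have ud: "up_dist p U (\<lambda>n. trunc r (F n)) G = (ph r - L) powr (1 / p)" for r
  proof -
    have ev: "eventually (\<lambda>n. r \<le> rho n) U"
    proof (rule eventually_mono[OF evK[of "nat \<lceil>r\<rceil> + 1"]])
      fix n assume "nat \<lceil>r\<rceil> + 1 \<le> kk n"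
      hence "nat \<lceil>r\<rceil> \<le> kk n - 1" by linarith
      hence "real (nat \<lceil>r\<rceil>) \<le> real (kk n - 1)" by (simp only: of_nat_le_iff)
      moreover have "r \<le> real (nat \<lceil>r\<rceil>)" by linarith
      ultimately show "r \<le> rho n" unfolding rho_def by linarith
    qed
    have "((\<lambda>n. phi n r - phi n (rho n)) \<longlongrightarrow> ph r - L) U"
      by (intro tendsto_diff conv phirho)
    hence t: "((\<lambda>n. PI p (\<lambda>x. trunc r (F n) x - G n x)) \<longlongrightarrow> ph r - L) U"
      by (rule Lim_transform_eventually)
         (use ev in \<open>auto elim!: eventually_mono simp: G_def phi_def PI_diff_trunc[OF mF p0]\<close>)
    have "((\<lambda>n. PI p (\<lambda>x. trunc r (F n) x - G n x) powr (1 / p)) \<longlongrightarrow> (ph r - L) powr (1 / p)) U"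
      by (rule tendsto_powr'[OF t tendsto_const]) (use p0 in \<open>auto simp: PI_nonneg\<close>)
    thus ?thesis unfolding up_dist_def Lp_norm_PI using nb by (simp add: tendsto_Lim)
  qed
  have "((\<lambda>r. (ph r - L) powr (1 / p)) \<longlongrightarrow> 0) at_top"
  proof (rule tendsto_zero_powrI[OF _ tendsto_const])
    show "((\<lambda>r. ph r - L) \<longlongrightarrow> 0) at_top" using tendsto_diff[OF phL tendsto_const[of L]] by simp
  qed (use Lt p0 in \<open>auto intro: always_eventually\<close>)
  hence "R_rep p U F G" using upG unfolding R_rep_def ud by simp
  thus ?thesis by blast
qed


theorem lemma5p2:
  fixes p :: real and U :: "nat filter"
  assumes "2 < p" and "ultrafilter_nat U" and "nonprincipal U"
  shows "(\<forall>F. up_seq p F \<longrightarrow>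
            (\<exists>G. R_rep p U F G) \<and> (\<forall>G. R_rep p U F G \<longrightarrow> in_M U G))
       \<and> (\<forall>F. up_seq p F \<and> in_M U F \<longrightarrow> R_rep p U F F)"
  using part1[OF assms] part2[OF assms(1,2)] part3[OF assms(1,2)] by blast

end
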